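(* Let $n,N\ge1$, $\sigma^2>0$, $B_j>0$ ($j\in[N]$), $g_{ij}>0$ and $t_i>0$ ($i\in[n],j\in[N]$). Let $\tilde\gamma>0$ and a partition $0=\gamma_1<\gamma_2<\dots<\gamma_m<\gamma_{m+1}=\tilde\gamma$ be given. Set $b_1=1$, $a_1=\log_2(1+\gamma_2)/\gamma_2$, and for $\ell=2,\dots,m$ $$b_\ell=\frac{\log(\log_2(1+\gamma_{\ell+1}))-\log(\log_2(1+\gamma_\ell))}{\log\gamma_{\ell+1}-\log\gamma_\ell},\qquad a_\ell=e^{\log(\log_2(1+\gamma_{\ell+1}))-b_\ell\log\gamma_{\ell+1}},$$ and $\varphi_\ell(\gamma)=a_\ell\gamma^{b_\ell}$. For $q\in\mathbb{R}^N$ and $u\in\mathbb{R}^{n\times N}$ define, for $\ell\in[m]$, $$\hat f_\ell(q_j,u_{ij})=\log\Big(\frac{\sigma^2}{g_{ij}}e^{-q_j-\frac{u_{ij}}{b_\ell}}+\sum_{k\neq j}\frac{g_{ik}}{g_{ij}}e^{q_k-q_j-\frac{u_{ij}}{b_\ell}}\Big).$$ Put $P_j=e^{q_j}$, $x_{ij}=e^{u_{ij}}$ and $S_{ij}=\frac{P_jg_{ij}}{\sigma^2+\sum_{k\ne j}P_kg_{ik}}$. Then: (i) each $\hat f_\ell$ is a convex function of $(q,u)$; (ii) let $M>0$ and let $\bar z\in\{0,1\}^{n\times N}$ with $\sum_{j=1}^N\bar z_{ij}=N-1$ for all $i$, and $z_{ij}=1-\bar z_{ij}$. Assume $S_{ij}\le\tilde\gamma$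 for all $i,j$. If $$\hat f_\ell(q_j,u_{ij})\le\frac{\log\big(\frac{B_ja_\ell}{t_i}\big)}{b_\ell}+M\bar z_{ij}\quad\text{for all }\ell\in[m],\ i\in[n],\ j\in[N],$$ then $\sum_{j=1}^N x_{ij}B_j\log_2(1+S_{ij})\,z_{ij}\ge t_i$ for all $i\in[n]$; (iii) the conservatism of this approximation vanishes as $m\to\infty$: for any sequence of such partitions of $[0,\tilde\gamma]$ whose maximal subinterval length tends to $0$, $\sup_{\gamma\in[0,\tilde\gamma]}\big(\log_2(1+\gamma)-\min_{\ell\in[m]}\varphi_\ell(\gamma)\big)\to0$.
   Context: $\log$ is the natural logarithm; $[n]=\{1,\dots,n\}$. $P_j$ is the per-resource-block transmit power of base station $j$, $x_{ij}$ the fraction of base station $j$'s bandwidth given to user $i$, $z_{ij}=1$ iff user $i$ is associated with base station $j$, $t_i$ the throughput requirement of user $i$, and $\tilde\gamma$ an upper bound on the SINR. *)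

theory Defs
  imports "HOL-Analysis.Analysis"
begin

definition is_partition :: "real \<Rightarrow> nat \<Rightarrow> (nat \<Rightarrow> real) \<Rightarrow> bool" where
  "is_partition gt m gam \<longleftrightarrow> 1 \<le> m \<and> gam 1 = 0 \<and> gam (m + 1) = gt \<and>
     (\<forall>l\<in>{1..m}. gam l < gam (Suc l))"

definition mesh :: "nat \<Rightarrow> (nat \<Rightarrow> real) \<Rightarrow> real" where
  "mesh m gam = Max ((\<lambda>l. gam (Suc l) - gam l) ` {1..m})"

definition bcoef :: "(nat \<Rightarrow> real) \<Rightarrow> nat \<Rightarrow> real" where
  "bcoef gam l = (if l = 1 then 1 else
     (ln (log 2 (1 + gam (l + 1))) - ln (log 2 (1 + gam l))) / (ln (gam (l + 1)) - ln (gam l)))"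

definition acoef :: "(nat \<Rightarrow> real) \<Rightarrow> nat \<Rightarrow> real" where
  "acoef gam l = (if l = 1 then log 2 (1 + gam 2) / gam 2 else
     exp (ln (log 2 (1 + gam (l + 1))) - bcoef gam l * ln (gam (l + 1))))"

definition phi :: "(nat \<Rightarrow> real) \<Rightarrow> nat \<Rightarrow> real \<Rightarrow> real" where
  "phi gam l g = acoef gam l * g powr bcoef gam l"

definition fhat :: "real \<Rightarrow> ('n \<Rightarrow> 'N::finite \<Rightarrow> real) \<Rightarrow> real \<Rightarrow> real^'N \<Rightarrow> real^'N^'n \<Rightarrow> 'n \<Rightarrow> 'N \<Rightarrow> real" where
  "fhat sigma2 g b q u i j =
     ln (sigma2 / g i j * exp (- (q $ j) - (u $ i $ j) / b)
         + (\<Sum>k\<in>UNIV - {j}. g i k / g i j * exp (q $ k - q $ j - (u $ i $ j) / b)))"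

definition sinr :: "real \<Rightarrow> ('n \<Rightarrow> 'N::finite \<Rightarrow> real) \<Rightarrow> ('N \<Rightarrow> real) \<Rightarrow> 'n \<Rightarrow> 'N \<Rightarrow> real" where
  "sinr sigma2 g P i j = P j * g i j / (sigma2 + (\<Sum>k\<in>UNIV - {j}. P k * g i k))"

end

theory Submission
  imports Defs
begin

lemma G_concave: "concave_on UNIV (\<lambda>s::real. ln (ln (1 + exp s)))"
proof (rule f''_le0_imp_concave[where f' = "\<lambda>s. exp s / ((1 + exp s) * ln (1 + exp s))"
   and f'' = "\<lambda>s. exp s * (ln (1 + exp s) - exp s) / ((1 + exp s) * ln (1 + exp s))^2"])
  fix x :: real
  have p: "ln (1 + exp x) > 0" "1 + exp x > 0" by (simp_all add: add_pos_pos)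
  show "((\<lambda>s. ln (ln (1 + exp s))) has_real_derivative exp x / ((1 + exp x) * ln (1 + exp x))) (at x)"
    by (rule derivative_eq_intros refl | (use p in simp; fail))+
  show "((\<lambda>s. exp s / ((1 + exp s) * ln (1 + exp s))) has_real_derivative exp x * (ln (1 + exp x) - exp x) / ((1 + exp x) * ln (1 + exp x))^2) (at x)"
    apply (rule derivative_eq_intros refl | (use p in simp; fail))+
    using p apply (simp add: divide_simps power2_eq_square)
    by (simp add: algebra_simps)
  have "ln (1 + exp x) \<le> exp x" using ln_add_one_self_le_self[of "exp x"] by simp
  then show "exp x * (ln (1 + exp x) - exp x) / ((1 + exp x) * ln (1 + exp x))^2 \<le> 0"
    by (intro divide_nonpos_nonneg mult_nonneg_nonpos) auto
qed auto
lemma ivl_sub: assumes "convex (C::real set)" "x \<in> C" "y \<in> C" shows "{x..y} \<subseteq> C"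
  using assms convex_contains_segment closed_segment_eq_real_ivl
  by (metis atLeastatMost_empty' empty_subsetI)

lemma conc_sub: assumes "concave_on C f" "convex (C::real set)" "x \<in> C" "y \<in> C"
  shows "concave_on {x..y} f"
  using assms ivl_sub unfolding concave_on_def
  by (meson convex_on_subset convex_real_interval(5))

lemma secant_in:
  fixes f :: "real \<Rightarrow> real"
  assumes "concave_on C f" "convex C" "a < b" "a \<in> C" "b \<in> C" "a \<le> s" "s \<le> b"
  shows "f b + (f b - f a)/(b-a)*(s-b) \<le> f s"
proof -
  have "f s \<ge> (f b - f a) / (b - a) * (s - a) + f a"
    using concave_onD_Icc'[OF conc_sub[OF assms(1,2,4,5)], of s] assms by auto
  moreover have "(f b - f a) / (b - a) * (s - a) + f a = f b + (f b - f a)/(b-a)*(s-b)"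
    using assms(3) by (simp add: field_simps)
  ultimately show ?thesis by simp
qed

lemma secant_out:
  fixes f :: "real \<Rightarrow> real"
  assumes "concave_on C f" "convex C" "a < b" "a \<in> C" "b \<in> C" "s \<in> C" "s \<le> a \<or> b \<le> s"
  shows "f s \<le> f b + (f b - f a)/(b-a)*(s-b)"
  using assms(7)
proof
  assume sa: "s \<le> a"
  show ?thesis
  proof (cases "s = a")
    case True then show ?thesis using assms(3) by (simp add: field_simps)
  next
    case False
    then have sa': "s < a" using sa by simp
    have "f a \<ge> (f b - f s) / (b - s) * (a - s) + f s"
      using concave_onD_Icc'[OF conc_sub[OF assms(1,2,6,5)], of a] sa' assms(3) by auto
    then have "f a * (b - s) \<ge> (f b - f s) * (a - s) + f s * (b - s)"
      using sa' assms(3) by (simp add: field_simps)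
    then have "f s * (b - a) \<le> f a * (b - s) - f b * (a - s)"
      by (simp add: algebra_simps)
    moreover have "(f b + (f b - f a)/(b-a)*(s-b)) * (b - a) = f a * (b - s) - f b * (a - s)"
      using assms(3) by (simp add: field_simps)
    ultimately show ?thesis using assms(3)
      by (metis diff_gt_0_iff_gt mult_le_cancel_right_pos)
  qed
next
  assume bs: "b \<le> s"
  have "f b \<ge> (f s - f a) / (s - a) * (b - a) + f a"
    using concave_onD_Icc'[OF conc_sub[OF assms(1,2,4,6)], of b] bs assms(3) by auto
  then have "f b * (s - a) \<ge> (f s - f a) * (b - a) + f a * (s - a)"
    using bs assms(3) by (simp add: field_simps)
  then have "f s * (b - a) \<le> f b * (s - a) - f a * (s - b)"
    by (simp add: algebra_simps)
  moreover have "(f b + (f b - f a)/(b-a)*(s-b)) * (b - a) = f b * (s - a) - f a * (s - b)"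
    using assms(3) by (simp add: field_simps)
  ultimately show ?thesis using assms(3)
    by (metis diff_gt_0_iff_gt mult_le_cancel_right_pos)
qed

lemma log1p_concave: "concave_on {0..} (\<lambda>x::real. log 2 (1 + x))"
proof (rule f''_le0_imp_concave[where f' = "\<lambda>x. 1 / ((1 + x) * ln 2)" and f'' = "\<lambda>x. - 1 / ((1 + x)^2 * ln 2)"])
  fix x :: real assume x: "x \<in> {0..}"
  then have p: "1 + x > 0" by simp
  have l2: "ln (2::real) > 0" by simp
  show "((\<lambda>x. log 2 (1 + x)) has_real_derivative 1 / ((1 + x) * ln 2)) (at x)"
    by (rule derivative_eq_intros refl | (use p in simp; fail))+
  show "((\<lambda>x. 1 / ((1 + x) * ln 2)) has_real_derivative - 1 / ((1 + x)^2 * ln 2)) (at x)"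
    apply (rule derivative_eq_intros refl | (use p l2 in simp; fail))+
    using p l2 by (simp add: divide_simps power2_eq_square)
  show "- 1 / ((1 + x)^2 * ln 2) \<le> 0" using p l2 by (simp add: divide_nonpos_pos)
qed auto


lemma H_concave: "concave_on UNIV (\<lambda>s::real. ln (log 2 (1 + exp s)))"
proof -
  have e: "(\<lambda>s::real. ln (log 2 (1 + exp s))) = (\<lambda>s. ln (ln (1 + exp s)) - ln (ln 2))"
  proof
    fix s :: real
    have "ln (1 + exp s) > 0" by (simp add: add_pos_pos)
    then show "ln (log 2 (1 + exp s)) = ln (ln (1 + exp s)) - ln (ln 2)"
      by (simp add: log_def ln_div)
  qed
  show ?thesis unfolding e
    by (rule concave_on_diff[OF G_concave]) (simp add: convex_on_const)
qed

lemma part_mono: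
  assumes "is_partition gt m gam" "1 \<le> i" "i < j" "j \<le> m + 1"
  shows "gam i < gam j"
  using assms(3,4)
proof (induction j)
  case 0 then show ?case by simp
next
  case (Suc j)
  have step: "gam j < gam (Suc j)" using assms(1,2) Suc.prems unfolding is_partition_def by auto
  show ?case
  proof (cases "i = j")
    case True then show ?thesis using step by simp
  next
    case False
    then have "gam i < gam j" using Suc by auto
    then show ?thesis using step by simp
  qed
qed

lemma part_pos:
  assumes "is_partition gt m gam" "2 \<le> l" "l \<le> m + 1"
  shows "gam l > 0"
  using part_mono[OF assms(1), of 1 l] assms unfolding is_partition_def by auto

lemma part_find:
  fixes gam :: "nat \<Rightarrow> real"
  assumes "1 \<le> m" "gam 1 \<le> x" "x \<le> gam (m + 1)"
  shows "\<exists>l\<in>{1..m}. gam l \<le> x \<and> x \<le> gam (Suc l)"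
  using assms
proof (induction m)
  case 0 then show ?case by simp
next
  case (Suc m)
  show ?case
  proof (cases "m = 0")
    case True then show ?thesis using Suc.prems by auto
  next
    case False
    show ?thesis
    proof (cases "x \<le> gam (m + 1)")
      case True
      then obtain l where "l \<in> {1..m}" "gam l \<le> x \<and> x \<le> gam (Suc l)"
        using Suc.IH Suc.prems False by auto
      then show ?thesis by auto
    next
      case False
      then have "gam (Suc m) \<le> x" by simp
      then show ?thesis using Suc.prems by (intro bexI[of _ "Suc m"]) auto
    qed
  qed
qed

lemma phi_one:
  assumes part: "is_partition gt m gam" and x: "0 \<le> x"
  shows "bcoef gam 1 > 0" "acoef gam 1 > 0"
    "x \<le> gam 2 \<Longrightarrow> phi gam 1 x \<le> log 2 (1 + x) \<and> log 2 (1 + gam 1) \<le> phi gam 1 x"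
    "gam 2 \<le> x \<Longrightarrow> log 2 (1 + x) \<le> phi gam 1 x"
proof -
  have m1: "1 \<le> m" and g1: "gam 1 = 0" using part unfolding is_partition_def by auto
  have g2: "gam 2 > 0" using part_pos[OF part, of 2] m1 by simp
  let ?f = "\<lambda>x::real. log 2 (1 + x)"
  have f0: "?f 0 = 0" by simp
  have ac: "acoef gam 1 = ?f (gam 2) / gam 2" by (simp add: acoef_def)
  have ph: "phi gam 1 x = ?f (gam 2) / gam 2 * x"
    using x by (simp add: phi_def acoef_def bcoef_def powr_one)
  have lin: "?f (gam 2) + (?f (gam 2) - ?f 0) / (gam 2 - 0) * (x - gam 2) = ?f (gam 2) / gam 2 * x"
    using g2 by (simp add: field_simps)
  show "bcoef gam 1 > 0" by (simp add: bcoef_def)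
  show "acoef gam 1 > 0" unfolding ac using g2 by simp
  show "x \<le> gam 2 \<Longrightarrow> phi gam 1 x \<le> log 2 (1 + x) \<and> log 2 (1 + gam 1) \<le> phi gam 1 x"
  proof
    assume "x \<le> gam 2"
    then show "phi gam 1 x \<le> log 2 (1 + x)"
      using secant_in[OF log1p_concave _ g2, of x] x lin ph by simp
    show "log 2 (1 + gam 1) \<le> phi gam 1 x"
      using g1 g2 x ph by simp
  qed
  show "gam 2 \<le> x \<Longrightarrow> log 2 (1 + x) \<le> phi gam 1 x"
      using secant_out[OF log1p_concave _ g2, of x] x lin ph g2 by simp
qed


lemma phi_ge2:
  assumes part: "is_partition gt m gam" and l: "l \<in> {2..m}" and x: "0 \<le> x"
  shows "bcoef gam l > 0" "acoef gam l > 0"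
    "gam l \<le> x \<Longrightarrow> x \<le> gam (Suc l) \<Longrightarrow> phi gam l x \<le> log 2 (1 + x) \<and> log 2 (1 + gam l) \<le> phi gam l x"
    "x \<le> gam l \<or> gam (Suc l) \<le> x \<Longrightarrow> log 2 (1 + x) \<le> phi gam l x"
proof -
  define H where "H = (\<lambda>s::real. ln (log 2 (1 + exp s)))"
  have Hc: "concave_on UNIV H" unfolding H_def by (rule H_concave)
  have gl: "gam l > 0" using part_pos[OF part, of l] l by auto
  have gs: "gam (Suc l) > 0" using part_pos[OF part, of "Suc l"] l by auto
  have glt: "gam l < gam (Suc l)" using part_mono[OF part, of l "Suc l"] l by auto
  define a where "a = ln (gam l)"
  define b where "b = ln (gam (Suc l))"
  have ab: "a < b" unfolding a_def b_def using gl gs glt by simp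
  have Hp: "y > 0 \<Longrightarrow> H (ln y) = ln (log 2 (1 + y))" for y unfolding H_def by simp
  have eH: "y > 0 \<Longrightarrow> exp (H (ln y)) = log 2 (1 + y)" for y
    using Hp[of y] by (simp add: add_pos_pos)
  define c where "c = (H b - H a) / (b - a)"
  have bc: "bcoef gam l = c"
    using l unfolding bcoef_def c_def a_def b_def using Hp gl gs by auto
  have ac: "acoef gam l = exp (H b - c * b)"
    using l unfolding acoef_def b_def bc[symmetric] using Hp gs by auto
  have "log 2 (1 + gam l) < log 2 (1 + gam (Suc l))" using gl glt by simp
  moreover have "log 2 (1 + gam l) > 0" using gl by simp
  ultimately have "H a < H b" unfolding a_def b_def using Hp gl gs by simp
  then have cpos: "c > 0" unfolding c_def using ab by simp
  show "bcoef gam l > 0" using bc cpos by simp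
  show "acoef gam l > 0" using ac by simp
  have phx: "y > 0 \<Longrightarrow> phi gam l y = exp (H b + c * (ln y - b))" for y
    unfolding phi_def ac bc powr_def by (simp add: exp_add[symmetric] algebra_simps)
  have L: "H b + c * (s - b) = H b + (H b - H a)/(b-a)*(s-b)" for s unfolding c_def by simp
  show "gam l \<le> x \<Longrightarrow> x \<le> gam (Suc l) \<Longrightarrow> phi gam l x \<le> log 2 (1 + x) \<and> log 2 (1 + gam l) \<le> phi gam l x"
  proof -
    assume x1: "gam l \<le> x" and x2: "x \<le> gam (Suc l)"
    have xp: "x > 0" using gl x1 by simp
    have s1: "a \<le> ln x" "ln x \<le> b" unfolding a_def b_def using x1 x2 gl xp by auto
    have "H b + c * (ln x - b) \<le> H (ln x)"
      using secant_in[OF Hc _ ab _ _ s1] L by simp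
    then have A: "phi gam l x \<le> log 2 (1 + x)" using phx[OF xp] eH[OF xp] by (metis exp_le_cancel_iff)
    have "H b + c * (a - b) \<le> H b + c * (ln x - b)" using s1 cpos by simp
    moreover have "H b + c * (a - b) = H a" unfolding c_def using ab by (simp add: field_simps)
    ultimately have "H a \<le> H b + c * (ln x - b)" by simp
    then have "exp (H a) \<le> phi gam l x" using phx[OF xp] by simp
    then have "log 2 (1 + gam l) \<le> phi gam l x" using eH[OF gl] unfolding a_def by simp
    with A show ?thesis by simp
  qed
  show "x \<le> gam l \<or> gam (Suc l) \<le> x \<Longrightarrow> log 2 (1 + x) \<le> phi gam l x"
  proof -
    assume xo: "x \<le> gam l \<or> gam (Suc l) \<le> x"
    show ?thesis
    proof (cases "x = 0")
      case True then show ?thesis by (simp add: phi_def)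
    next
      case False
      then have xp: "x > 0" using x by simp
      have s1: "ln x \<le> a \<or> b \<le> ln x" unfolding a_def b_def using xo gl gs xp by auto
      have "H (ln x) \<le> H b + c * (ln x - b)"
        using secant_out[OF Hc _ ab _ _ _ s1] L by simp
      then show ?thesis using phx[OF xp] eH[OF xp] by (metis exp_le_cancel_iff)
    qed
  qed
qed

lemma expmix:
  fixes U V t e1 e2 :: real
  assumes "U > 0" "V > 0" "0 \<le> t" "t \<le> 1"
  shows "exp ((1-t)*e1 + t*e2) \<le> exp ((1-t)*ln U + t*ln V) * ((1-t)*exp e1/U + t*exp e2/V)"
proof -
  have "exp ((1-t)*(e1 - ln U) + t*(e2 - ln V)) \<le> (1-t)*exp (e1 - ln U) + t*exp (e2 - ln V)"
    using convex_onD[OF exp_convex, of t "e1 - ln U" "e2 - ln V"] assms by simp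
  also have "\<dots> = (1-t)*exp e1/U + t*exp e2/V" using assms by (simp add: exp_diff)
  finally have *: "exp ((1-t)*(e1 - ln U) + t*(e2 - ln V)) \<le> (1-t)*exp e1/U + t*exp e2/V" .
  have "exp ((1-t)*e1 + t*e2) = exp ((1-t)*ln U + t*ln V) * exp ((1-t)*(e1 - ln U) + t*(e2 - ln V))"
    by (simp add: exp_add[symmetric] algebra_simps)
  also have "\<dots> \<le> exp ((1-t)*ln U + t*ln V) * ((1-t)*exp e1/U + t*exp e2/V)"
    using * by (intro mult_left_mono) auto
  finally show ?thesis .
qed

lemma lse_convex:
  fixes E0 :: "'a::real_vector \<Rightarrow> real" and E :: "'k \<Rightarrow> 'a \<Rightarrow> real"
  assumes fin: "finite K"
    and a0: "\<And>x y t. E0 ((1-t) *\<^sub>R x + t *\<^sub>R y) = (1-t) * E0 x + t * E0 y"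
    and ak: "\<And>k x y t. k \<in> K \<Longrightarrow> E k ((1-t) *\<^sub>R x + t *\<^sub>R y) = (1-t) * E k x + t * E k y"
  shows "convex_on UNIV (\<lambda>p. ln (exp (E0 p) + (\<Sum>k\<in>K. exp (E k p))))"
proof (rule convex_onI)
  fix t :: real and x y :: 'a
  assume t: "0 < t" "t < 1"
  define F where "F = (\<lambda>p. exp (E0 p) + (\<Sum>k\<in>K. exp (E k p)))"
  have Fp: "F p > 0" for p unfolding F_def
    by (intro add_pos_nonneg) (auto intro: sum_nonneg)
  define U where "U = F x"
  define V where "V = F y"
  have U: "U > 0" and V: "V > 0" using Fp unfolding U_def V_def by auto
  define W where "W = exp ((1-t)*ln U + t*ln V)"
  define z where "z = (1-t) *\<^sub>R x + t *\<^sub>R y"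
  have "F z = exp ((1-t) * E0 x + t * E0 y) + (\<Sum>k\<in>K. exp ((1-t) * E k x + t * E k y))"
    unfolding F_def z_def a0 using ak by simp
  also have "\<dots> \<le> W * ((1-t)*exp (E0 x)/U + t*exp (E0 y)/V)
      + (\<Sum>k\<in>K. W * ((1-t)*exp (E k x)/U + t*exp (E k y)/V))"
    unfolding W_def using U V t
    by (intro add_mono sum_mono expmix) auto
  also have "\<dots> = W * ((1-t)/U * F x + t/V * F y)"
    unfolding F_def by (simp add: algebra_simps sum_distrib_left sum.distrib sum_divide_distrib)
  also have "\<dots> = W" using U V unfolding U_def V_def by simp
  finally have "F z \<le> W" .
  moreover have "W > 0" unfolding W_def by simp
  ultimately have "ln (F z) \<le> ln W" using Fp[of z] by simp
  then show "ln (F z) \<le> (1 - t) * ln (F x) + t * ln (F y)"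
    unfolding W_def U_def V_def by simp
qed auto

lemma fhat_convex:
  fixes sigma2 :: real and g :: "'n::finite \<Rightarrow> 'N::finite \<Rightarrow> real"
  assumes "sigma2 > 0" "\<And>i j. g i j > 0"
  shows "convex_on UNIV (\<lambda>p :: (real^'N) \<times> (real^'N^'n). fhat sigma2 g b (fst p) (snd p) i j)"
proof -
  define E0 where "E0 = (\<lambda>p :: (real^'N) \<times> (real^'N^'n). ln (sigma2 / g i j) - fst p $ j - snd p $ i $ j / b)"
  define E where "E = (\<lambda>k (p :: (real^'N) \<times> (real^'N^'n)). ln (g i k / g i j) + fst p $ k - fst p $ j - snd p $ i $ j / b)"
  have eq: "(\<lambda>p :: (real^'N) \<times> (real^'N^'n). fhat sigma2 g b (fst p) (snd p) i j)
      = (\<lambda>p. ln (exp (E0 p) + (\<Sum>k\<in>UNIV - {j}. exp (E k p))))"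
    unfolding fhat_def E0_def E_def using assms
    by (intro ext) (simp add: exp_add exp_diff exp_minus field_simps)
  show ?thesis unfolding eq
    by (rule lse_convex) (auto simp: E0_def E_def algebra_simps add_divide_distrib diff_divide_distrib)
qed

lemma phi_props:
  assumes part: "is_partition gt m gam" and l: "l \<in> {1..m}" and x: "0 \<le> x"
  shows "bcoef gam l > 0" "acoef gam l > 0"
    "gam l \<le> x \<Longrightarrow> x \<le> gam (Suc l) \<Longrightarrow> phi gam l x \<le> log 2 (1 + x) \<and> log 2 (1 + gam l) \<le> phi gam l x"
    "x \<le> gam l \<or> gam (Suc l) \<le> x \<Longrightarrow> log 2 (1 + x) \<le> phi gam l x"
proof -
  have g1: "gam 1 = 0" using part unfolding is_partition_def by auto
  note P1 = phi_one[OF part x]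
  show "bcoef gam l > 0" using P1 phi_ge2[OF part _ x] l by (cases "l = 1") auto
  show "acoef gam l > 0" using P1 phi_ge2[OF part _ x] l by (cases "l = 1") auto
  show "gam l \<le> x \<Longrightarrow> x \<le> gam (Suc l) \<Longrightarrow> phi gam l x \<le> log 2 (1 + x) \<and> log 2 (1 + gam l) \<le> phi gam l x"
  proof (cases "l = 1")
    case True
    then show "gam l \<le> x \<Longrightarrow> x \<le> gam (Suc l) \<Longrightarrow> ?thesis" using P1 by (simp add: numeral_2_eq_2)
  next
    case False
    then show "gam l \<le> x \<Longrightarrow> x \<le> gam (Suc l) \<Longrightarrow> ?thesis" using phi_ge2[OF part _ x] l by auto
  qed
  show "x \<le> gam l \<or> gam (Suc l) \<le> x \<Longrightarrow> log 2 (1 + x) \<le> phi gam l x"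
  proof (cases "l = 1")
    case True
    then show "x \<le> gam l \<or> gam (Suc l) \<le> x \<Longrightarrow> ?thesis" using P1 g1 x
      by (auto simp: numeral_2_eq_2 phi_def)
  next
    case False
    then show "x \<le> gam l \<or> gam (Suc l) \<le> x \<Longrightarrow> ?thesis" using phi_ge2[OF part _ x] l by auto
  qed
qed

lemma log_diff_le:
  fixes y z :: real
  assumes "0 \<le> z" "z \<le> y"
  shows "log 2 (1 + y) - log 2 (1 + z) \<le> (y - z) / ln 2"
proof -
  have "log 2 (1 + y) - log 2 (1 + z) = ln ((1 + y) / (1 + z)) / ln 2"
    using assms by (simp add: log_def ln_div diff_divide_distrib)
  also have "\<dots> \<le> ((1 + y) / (1 + z) - 1) / ln 2"
    using assms by (intro divide_right_mono ln_le_minus_one) auto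
  also have "(1 + y) / (1 + z) - 1 = (y - z) / (1 + z)" using assms by (simp add: field_simps)
  also have "\<dots> \<le> (y - z) / 1" using assms by (intro divide_left_mono) auto
  also have "\<dots> = y - z" by simp
  finally show ?thesis by (simp add: divide_right_mono)
qed

lemma phi_err:
  assumes part: "is_partition gt m gam" and l: "l \<in> {1..m}" and x: "0 \<le> x"
  shows "log 2 (1 + x) - phi gam l x \<le> mesh m gam / ln 2"
proof -
  have gap: "gam (Suc l) - gam l \<le> mesh m gam"
    unfolding mesh_def using l by (intro Max_ge) auto
  have glt: "gam l < gam (Suc l)" using part l unfolding is_partition_def by auto
  have g0: "gam l \<ge> 0"
  proof (cases "l = 1")
    case True then show ?thesis using part unfolding is_partition_def by auto
  next
    case False then show ?thesis using part_pos[OF part, of l] l by auto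
  qed
  show ?thesis
  proof (cases "gam l \<le> x \<and> x \<le> gam (Suc l)")
    case True
    moreover have "log 2 (1 + x) \<le> log 2 (1 + gam (Suc l))" using True g0 by simp
    ultimately have "log 2 (1 + x) - phi gam l x \<le> log 2 (1 + gam (Suc l)) - log 2 (1 + gam l)"
      using phi_props(3)[OF part l x] g0 by linarith
    also have "\<dots> \<le> (gam (Suc l) - gam l) / ln 2" using g0 glt by (intro log_diff_le) auto
    also have "\<dots> \<le> mesh m gam / ln 2" using gap by (simp add: divide_right_mono)
    finally show ?thesis .
  next
    case False
    then have "log 2 (1 + x) - phi gam l x \<le> 0" using phi_props(4)[OF part l x] by auto
    also have "0 \<le> mesh m gam / ln 2" using gap glt by simp
    finally show ?thesis .
  qed
qed

lemma part2_core:
  fixes sigma2 :: real and g :: "'n::finite \<Rightarrow> 'N::finite \<Rightarrow> real"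
  assumes sigma_pos: "sigma2 > 0" and g_pos: "\<And>i j. g i j > 0" and Bp: "B j > 0" and tp: "t i > 0"
    and part: "is_partition gt m gam"
    and Sle: "sinr sigma2 g (\<lambda>k. exp (q $ k)) i j \<le> gt"
    and H: "\<forall>l\<in>{1..m}. fhat sigma2 g (bcoef gam l) q u i j \<le> ln (B j * acoef gam l / t i) / bcoef gam l"
  shows "t i \<le> exp (u $ i $ j) * B j * log 2 (1 + sinr sigma2 g (\<lambda>k. exp (q $ k)) i j)"
proof -
  define D where "D = sigma2 + (\<Sum>k\<in>UNIV - {j}. exp (q $ k) * g i k)"
  define S where "S = sinr sigma2 g (\<lambda>k. exp (q $ k)) i j"
  have Dp: "D > 0" unfolding D_def using sigma_pos g_pos
    by (intro add_pos_nonneg sum_nonneg) (auto intro: less_imp_le)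
  have SD: "S = exp (q $ j) * g i j / D" unfolding S_def sinr_def D_def by simp
  have Sp: "S > 0" unfolding SD using Dp g_pos[of i j] by simp
  have m1: "1 \<le> m" and g1: "gam 1 = 0" and gm: "gam (m + 1) = gt"
    using part unfolding is_partition_def by auto
  obtain l where l: "l \<in> {1..m}" "gam l \<le> S" "S \<le> gam (Suc l)"
    using part_find[OF m1, of gam S] g1 gm Sp Sle unfolding S_def by auto
  define b where "b = bcoef gam l"
  define a where "a = acoef gam l"
  have bp: "b > 0" and ap: "a > 0" unfolding a_def b_def using phi_props(1,2)[OF part l(1)] Sp by auto
  have "fhat sigma2 g b q u i j = ln (D * (exp (- (q $ j) - u $ i $ j / b) / g i j))"
  proof -
    define w where "w = u $ i $ j / b"
    have e: "exp (q$k - q$j - w) = exp (q$k) * exp (- q$j - w)" for k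
      by (simp add: exp_add[symmetric])
    have t: "g i k / g i j * exp (q$k - q$j - w) = exp (q$k) * g i k * (exp (- q$j - w) / g i j)" for k
      unfolding e by simp
    have "sigma2 / g i j * exp (- (q $ j) - w) + (\<Sum>k\<in>UNIV - {j}. g i k / g i j * exp (q$k - q$j - w))
        = D * (exp (- (q $ j) - w) / g i j)"
      unfolding t D_def by (simp add: distrib_right sum_distrib_right add_divide_distrib sum_divide_distrib)
    then show ?thesis unfolding fhat_def w_def by simp
  qed
  also have "D * (exp (- (q $ j) - u $ i $ j / b) / g i j) = exp (- (u $ i $ j / b)) / S"
    unfolding SD using Dp g_pos[of i j] by (simp add: exp_diff exp_minus field_simps)
  also have "ln (exp (- (u $ i $ j / b)) / S) = - (u $ i $ j / b) - ln S"
    using Sp by (simp add: ln_div)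
  finally have fh: "fhat sigma2 g b q u i j = - (u $ i $ j / b) - ln S" .
  have "- (u $ i $ j / b) - ln S \<le> ln (B j * a / t i) / b"
    using bspec[OF H l(1)] fh unfolding a_def b_def by simp
  then have "b * (- (u $ i $ j / b) - ln S) \<le> ln (B j * a / t i)"
    using bp by (simp add: pos_le_divide_eq mult.commute)
  then have "- u $ i $ j - b * ln S \<le> ln (B j) + ln a - ln (t i)"
    using bp ap Bp tp by (simp add: ln_div ln_mult algebra_simps)
  then have "ln (t i) \<le> ln (exp (u $ i $ j) * B j * (a * S powr b))"
    using bp ap Bp tp Sp by (simp add: ln_mult ln_powr algebra_simps)
  then have "t i \<le> exp (u $ i $ j) * B j * (a * S powr b)"
    using tp ap Bp Sp by (simp add: ln_le_cancel_iff)
  also have "a * S powr b = phi gam l S" unfolding phi_def a_def b_def by simp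
  also have "\<dots> \<le> log 2 (1 + S)" using phi_props(3)[OF part l(1) _ l(2,3)] Sp by simp
  finally show ?thesis unfolding S_def using Bp by (simp add: mult_left_mono)
qed

theorem theorem1:
  fixes sigma2 gt :: real
    and B :: "'N::finite \<Rightarrow> real"
    and g :: "'n::finite \<Rightarrow> 'N \<Rightarrow> real"
    and t :: "'n \<Rightarrow> real"
    and m :: nat and gam :: "nat \<Rightarrow> real"
  assumes sigma_pos: "sigma2 > 0"
    and B_pos: "\<And>j. B j > 0"
    and g_pos: "\<And>i j. g i j > 0"
    and t_pos: "\<And>i. t i > 0"
    and gt_pos: "gt > 0"
    and part: "is_partition gt m gam"
  shows
    "(\<forall>l\<in>{1..m}. \<forall>i j.
        convex_on UNIV (\<lambda>p :: (real^'N) \<times> (real^'N^'n).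
           fhat sigma2 g (bcoef gam l) (fst p) (snd p) i j))
     \<and>
     (\<forall>(M::real) (zbar :: 'n \<Rightarrow> 'N \<Rightarrow> nat) (q :: real^'N) (u :: real^'N^'n).
        M > 0 \<longrightarrow>
        (\<forall>i j. zbar i j \<in> {0, 1}) \<longrightarrow>
        (\<forall>i. (\<Sum>j\<in>UNIV. zbar i j) = CARD('N) - 1) \<longrightarrow>
        (\<forall>i j. sinr sigma2 g (\<lambda>k. exp (q $ k)) i j \<le> gt) \<longrightarrow>
        (\<forall>l\<in>{1..m}. \<forall>i j.
           fhat sigma2 g (bcoef gam l) q u i j
             \<le> ln (B j * acoef gam l / t i) / bcoef gam l + M * real (zbar i j)) \<longrightarrow>
        (\<forall>i. (\<Sum>j\<in>UNIV. exp (u $ i $ j) * B j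
                 * log 2 (1 + sinr sigma2 g (\<lambda>k. exp (q $ k)) i j)
                 * (1 - real (zbar i j))) \<ge> t i))
     \<and>
     (\<forall>(ms :: nat \<Rightarrow> nat) (gs :: nat \<Rightarrow> nat \<Rightarrow> real).
        (\<forall>k. is_partition gt (ms k) (gs k)) \<longrightarrow>
        (\<lambda>k. mesh (ms k) (gs k)) \<longlonglongrightarrow> 0 \<longrightarrow>
        (\<lambda>k. SUP x\<in>{0..gt}. log 2 (1 + x) - Min ((\<lambda>l. phi (gs k) l x) ` {1..ms k}))
          \<longlonglongrightarrow> 0)"
proof (intro conjI)
  show "\<forall>l\<in>{1..m}. \<forall>i j. convex_on UNIV (\<lambda>p :: (real^'N) \<times> (real^'N^'n).
           fhat sigma2 g (bcoef gam l) (fst p) (snd p) i j)"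
    using fhat_convex[of sigma2 g, OF sigma_pos g_pos] by blast
next
  show "\<forall>(M::real) (zbar :: 'n \<Rightarrow> 'N \<Rightarrow> nat) (q :: real^'N) (u :: real^'N^'n).
        M > 0 \<longrightarrow>
        (\<forall>i j. zbar i j \<in> {0, 1}) \<longrightarrow>
        (\<forall>i. (\<Sum>j\<in>UNIV. zbar i j) = CARD('N) - 1) \<longrightarrow>
        (\<forall>i j. sinr sigma2 g (\<lambda>k. exp (q $ k)) i j \<le> gt) \<longrightarrow>
        (\<forall>l\<in>{1..m}. \<forall>i j.
           fhat sigma2 g (bcoef gam l) q u i j
             \<le> ln (B j * acoef gam l / t i) / bcoef gam l + M * real (zbar i j)) \<longrightarrow>
        (\<forall>i. (\<Sum>j\<in>UNIV. exp (u $ i $ j) * B j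
                 * log 2 (1 + sinr sigma2 g (\<lambda>k. exp (q $ k)) i j)
                 * (1 - real (zbar i j))) \<ge> t i)"
  proof (intro allI impI)
    fix M :: real and zbar :: "'n \<Rightarrow> 'N \<Rightarrow> nat" and q :: "real^'N" and u :: "real^'N^'n" and i :: 'n
    assume Mp: "M > 0" and z01: "\<forall>i j. zbar i j \<in> {0, 1}"
      and zs: "\<forall>i. (\<Sum>j\<in>UNIV. zbar i j) = CARD('N) - 1"
      and Sle: "\<forall>i j. sinr sigma2 g (\<lambda>k. exp (q $ k)) i j \<le> gt"
      and Hf: "\<forall>l\<in>{1..m}. \<forall>i j. fhat sigma2 g (bcoef gam l) q u i j
             \<le> ln (B j * acoef gam l / t i) / bcoef gam l + M * real (zbar i j)"
    obtain j0 where j0: "zbar i j0 = 0"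
    proof (rule ccontr)
      assume "\<not> thesis"
      then have "\<forall>j. zbar i j = 1" using that z01 by blast
      then have "(\<Sum>j\<in>UNIV. zbar i j) = CARD('N)" by simp
      moreover have "CARD('N) > 0" by simp
      ultimately show False using zs[rule_format, of i] by linarith
    qed
    have core: "t i \<le> exp (u $ i $ j0) * B j0 * log 2 (1 + sinr sigma2 g (\<lambda>k. exp (q $ k)) i j0)"
    proof (rule part2_core[OF sigma_pos g_pos B_pos t_pos part])
      show "sinr sigma2 g (\<lambda>k. exp (q $ k)) i j0 \<le> gt" using Sle by simp
      show "\<forall>l\<in>{1..m}. fhat sigma2 g (bcoef gam l) q u i j0 \<le> ln (B j0 * acoef gam l / t i) / bcoef gam l"
      proof
        fix l assume "l \<in> {1..m}"
        from bspec[OF Hf this] show "fhat sigma2 g (bcoef gam l) q u i j0 \<le> ln (B j0 * acoef gam l / t i) / bcoef gam l"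
          using j0 by (metis add.right_neutral mult_zero_right of_nat_0)
      qed
    qed
    have Snn: "sinr sigma2 g (\<lambda>k. exp (q $ k)) i j \<ge> 0" for j
      unfolding sinr_def using sigma_pos g_pos
      by (intro divide_nonneg_nonneg mult_nonneg_nonneg add_nonneg_nonneg sum_nonneg) (auto intro: less_imp_le)
    have nn: "0 \<le> exp (u $ i $ j) * B j * log 2 (1 + sinr sigma2 g (\<lambda>k. exp (q $ k)) i j) * (1 - real (zbar i j))" for j
    proof -
      have "zbar i j \<le> 1" using z01[rule_format, of i j] by auto
      then have "0 \<le> 1 - real (zbar i j)" by simp
      moreover have "0 \<le> log 2 (1 + sinr sigma2 g (\<lambda>k. exp (q $ k)) i j)" using Snn[of j] by simp
      ultimately show ?thesis using B_pos[of j] by (intro mult_nonneg_nonneg) (auto intro: less_imp_le)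
    qed
    have "t i \<le> exp (u $ i $ j0) * B j0 * log 2 (1 + sinr sigma2 g (\<lambda>k. exp (q $ k)) i j0) * (1 - real (zbar i j0))"
      using core j0 by simp
    also have "\<dots> \<le> (\<Sum>j\<in>UNIV. exp (u $ i $ j) * B j
                 * log 2 (1 + sinr sigma2 g (\<lambda>k. exp (q $ k)) i j) * (1 - real (zbar i j)))"
      by (rule member_le_sum) (use nn in auto)
    finally show "(\<Sum>j\<in>UNIV. exp (u $ i $ j) * B j
                 * log 2 (1 + sinr sigma2 g (\<lambda>k. exp (q $ k)) i j)
                 * (1 - real (zbar i j))) \<ge> t i" .
  qed
next
  show "\<forall>(ms :: nat \<Rightarrow> nat) (gs :: nat \<Rightarrow> nat \<Rightarrow> real).
        (\<forall>k. is_partition gt (ms k) (gs k)) \<longrightarrow>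
        (\<lambda>k. mesh (ms k) (gs k)) \<longlonglongrightarrow> 0 \<longrightarrow>
        (\<lambda>k. SUP x\<in>{0..gt}. log 2 (1 + x) - Min ((\<lambda>l. phi (gs k) l x) ` {1..ms k}))
          \<longlonglongrightarrow> 0"
  proof (intro allI impI)
    fix ms :: "nat \<Rightarrow> nat" and gs :: "nat \<Rightarrow> nat \<Rightarrow> real"
    assume parts: "\<forall>k. is_partition gt (ms k) (gs k)" and mt: "(\<lambda>k. mesh (ms k) (gs k)) \<longlonglongrightarrow> 0"
    define F where "F k x = log 2 (1 + x) - Min ((\<lambda>l. phi (gs k) l x) ` {1..ms k})" for k x
    have ub: "F k x \<le> mesh (ms k) (gs k) / ln 2" if x: "x \<in> {0..gt}" for k x
    proof -
      have p: "is_partition gt (ms k) (gs k)" using parts by simp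
      then have ne: "{1..ms k} \<noteq> {}" unfolding is_partition_def by auto
      have "Min ((\<lambda>l. phi (gs k) l x) ` {1..ms k}) \<in> (\<lambda>l. phi (gs k) l x) ` {1..ms k}"
        using ne by (intro Min_in) auto
      then obtain l where l: "l \<in> {1..ms k}" and e: "Min ((\<lambda>l. phi (gs k) l x) ` {1..ms k}) = phi (gs k) l x"
        by auto
      show ?thesis unfolding F_def e using phi_err[OF p l] x by auto
    qed
    have F0: "F k 0 = 0" for k
    proof -
      have p: "is_partition gt (ms k) (gs k)" using parts by simp
      then have ne: "{1..ms k} \<noteq> {}" unfolding is_partition_def by auto
      have "(\<lambda>l. phi (gs k) l 0) ` {1..ms k} = {0}" using ne by (auto simp: phi_def)
      then show ?thesis unfolding F_def by simp
    qed
    have ne0: "{0..gt} \<noteq> {}" using gt_pos by simp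
    have lo: "0 \<le> (SUP x\<in>{0..gt}. F k x)" for k
    proof -
      have "bdd_above (F k ` {0..gt})" using ub by (intro bdd_aboveI2) auto
      then have "F k 0 \<le> (SUP x\<in>{0..gt}. F k x)" using gt_pos by (intro cSUP_upper) auto
      then show ?thesis using F0 by simp
    qed
    have hi: "(SUP x\<in>{0..gt}. F k x) \<le> mesh (ms k) (gs k) / ln 2" for k
      using ne0 ub by (intro cSUP_least) auto
    have "(\<lambda>k. mesh (ms k) (gs k) / ln 2) \<longlonglongrightarrow> 0 / ln 2"
      by (intro tendsto_divide mt tendsto_const) auto
    then have "(\<lambda>k. mesh (ms k) (gs k) / ln 2) \<longlonglongrightarrow> 0" by simp
    then have "(\<lambda>k. SUP x\<in>{0..gt}. F k x) \<longlonglongrightarrow> 0"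
      by (rule tendsto_sandwich[rotated 2, OF tendsto_const]) (use lo hi in auto)
    then show "(\<lambda>k. SUP x\<in>{0..gt}. log 2 (1 + x) - Min ((\<lambda>l. phi (gs k) l x) ` {1..ms k})) \<longlonglongrightarrow> 0"
      unfolding F_def .
  qed
qed

end
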